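(* Let $\mathbf{z}^* \in \mathbb{R}^d$ and $\mathcal{L}(\mathbf{z}) = \Vert \mathbf{z} - \mathbf{z}^* \Vert_2^2$. Let $\mathbf{z} : [0,1] \to \mathbb{R}^d$ be a smooth curve with nowhere-vanishing derivative $\partial_\alpha \mathbf{z}(\alpha) \neq 0$, such that $\mathbf{z}(1) = \mathbf{z}^*$ and $\mathcal{L}(\mathbf{z}(0)) > 0$. If the Gauss length of $\mathbf{z}$ is less than $\pi/2$, then $\alpha \mapsto \mathcal{L}(\mathbf{z}(\alpha))$ is monotonically decreasing (non-increasing) on $[0,1]$.
   Context: For a smooth curve $\mathbf{z}$ with nonvanishing derivative, let $\hat{\mathbf{v}}(\alpha) = \frac{\partial_\alpha \mathbf{z}(\alpha)}{\Vert \partial_\alpha \mathbf{z}(\alpha)\Vert_2}$ be the normalized tangent vector (the Gauss map, viewed as a map into the unit sphere, or into projective space with antipodal points identified). The Gauss length of $\mathbf{z}$ is $\int_0^1 \sqrt{\langle \partial_\alpha \hat{\mathbf{v}}(\alpha), \partial_\alpha \hat{\mathbf{v}}(\alpha)\rangle}\, d\alpha$; equivalently, writing $\mathbf{v} = \partial_\alpha \mathbf{z}$ and $\mathbf{a} = \partial_\alpha \mathbf{v}$, the integrand is $\sqrt{\frac{(\mathbf{v}\cdot\mathbf{v})(\mathbf{a}\cdot\mathbf{a}) - (\mathbf{a}\cdot\mathbf{v})^2}{(\mathbf{v}\cdot\mathbf{v})^2}}\,\Vert\mathbf{v}\Vert_2$, i.e. $\kappa(\alpha)\Vert \mathbf{v}(\alpha)\Vert_2$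 with $\kappa$ the curvature. *)

theory Defs
  imports "HOL-Analysis.Analysis"
begin

definition smooth_curve :: "(real \<Rightarrow> 'a::real_normed_vector) \<Rightarrow> bool" where
  "smooth_curve z \<longleftrightarrow>
     (\<exists>D :: nat \<Rightarrow> real \<Rightarrow> 'a. D 0 = z \<and>
        (\<forall>k. \<forall>t\<in>{0..1}. (D k has_vector_derivative D (Suc k) t) (at t within {0..1})))"

definition vel :: "(real \<Rightarrow> 'a::real_normed_vector) \<Rightarrow> real \<Rightarrow> 'a" where
  "vel z t = vector_derivative z (at t within {0..1})"

definition gauss_map :: "(real \<Rightarrow> 'a::real_normed_vector) \<Rightarrow> real \<Rightarrow> 'a" where
  "gauss_map z t = vel z t /\<^sub>R norm (vel z t)"

definition gauss_length :: "(real \<Rightarrow> 'a::real_normed_vector) \<Rightarrow> real" where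
  "gauss_length z =
     integral {0..1} (\<lambda>t. norm (vector_derivative (gauss_map z) (at t within {0..1})))"

end

theory Submission
  imports Defs
begin

lemma perp_bound:
  fixes x y w :: "'a::real_inner"
  assumes "norm x = 1" "norm y = 1" "inner y w = 0"
  shows "\<bar>inner x w\<bar> \<le> sqrt (1 - (inner x y)\<^sup>2) * norm w"
proof -
  define c where "c = inner x y"
  have e: "inner x w = inner (x - c *\<^sub>R y) w"
    using assms(3) by (simp add: inner_diff_left)
  have "(norm (x - c *\<^sub>R y))\<^sup>2 = inner x x - 2 * c * inner x y + c * c * inner y y"
    by (simp add: power2_norm_eq_inner inner_diff_left inner_diff_right inner_commute algebra_simps)
  also have "\<dots> = 1 - c\<^sup>2"
    using assms(1,2) by (simp add: power2_norm_eq_inner[symmetric] c_def power2_eq_square)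
  finally have "norm (x - c *\<^sub>R y) = sqrt (1 - c\<^sup>2)"
    by (metis norm_ge_zero real_sqrt_unique)
  then show ?thesis using e Cauchy_Schwarz_ineq2[of "x - c *\<^sub>R y" w] c_def by simp
qed

lemma key:
  fixes u u' :: "real \<Rightarrow> 'a::real_inner"
  assumes der: "\<And>t. t \<in> {0..1} \<Longrightarrow> (u has_vector_derivative u' t) (at t within {0..1})"
    and cont: "continuous_on {0..1} (\<lambda>t. norm (u' t))"
    and unit: "\<And>t. t \<in> {0..1} \<Longrightarrow> norm (u t) = 1"
    and orth: "\<And>t. t \<in> {0..1} \<Longrightarrow> inner (u t) (u' t) = 0"
    and len: "integral {0..1} (\<lambda>t. norm (u' t)) < pi/2"
    and st: "0 \<le> s" "s \<le> t" "t \<le> 1"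
  shows "inner (u s) (u t) > 0"
proof (rule ccontr)
  assume neg: "\<not> inner (u s) (u t) > 0"
  define c where "c \<tau> = inner (u s) (u \<tau>)" for \<tau>
  define ell where "ell \<tau> = integral {0..\<tau>} (\<lambda>t. norm (u' t))" for \<tau>
  have ucont: "continuous_on {0..1} u"
    by (rule continuous_on_vector_derivative) (rule der)
  have ccont: "continuous_on {0..1} c" unfolding c_def by (intro continuous_intros ucont)
  have cabs: "\<bar>c \<tau>\<bar> \<le> 1" if "\<tau> \<in> {0..1}" for \<tau>
    using Cauchy_Schwarz_ineq2[of "u s" "u \<tau>"] unit[of s] unit[OF that] st unfolding c_def by auto
  have cs: "c s = 1" using unit[of s] st unfolding c_def by (simp add: power2_norm_eq_inner[symmetric])
  have cder: "(c has_real_derivative inner (u s) (u' \<tau>)) (at \<tau> within {0..1})" if "\<tau> \<in> {0..1}" for \<tau>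
    unfolding c_def has_real_derivative_iff_has_vector_derivative
    by (rule bounded_linear.has_vector_derivative[OF bounded_linear_inner_right der[OF that]])
  have lder: "(ell has_real_derivative norm (u' \<tau>)) (at \<tau> within {0..1})" if "\<tau> \<in> {0..1}" for \<tau>
    unfolding ell_def has_real_derivative_iff_has_vector_derivative
    by (rule integral_has_vector_derivative[OF cont that])
  have lcont: "continuous_on {0..1} ell"
    by (rule continuous_on_vector_derivative, rule lder[unfolded has_real_derivative_iff_has_vector_derivative])
  define S where "S = {s..t} \<inter> c -` {..0}"
  have Scl: "closed S" unfolding S_def
    by (rule continuous_closed_preimage) (use ccont st in \<open>auto intro: continuous_on_subset\<close>)
  have tS: "t \<in> S" using neg st unfolding S_def c_def by auto
  define t1 where "t1 = Inf S"
  have bS: "bdd_below S" unfolding S_def by auto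
  have t1S: "t1 \<in> S" unfolding t1_def using closed_contains_Inf[OF _ bS Scl] tS by auto
  have t1: "s \<le> t1" "t1 \<le> t" "c t1 \<le> 0" using t1S unfolding S_def by auto
  have cpos: "c \<tau> > 0" if "s \<le> \<tau>" "\<tau> < t1" for \<tau>
  proof (rule ccontr)
    assume "\<not> c \<tau> > 0"
    then have "\<tau> \<in> S" using that t1 unfolding S_def by auto
    then have "t1 \<le> \<tau>" unfolding t1_def using bS by (rule cInf_lower)
    then show False using that by simp
  qed
  define T where "T = {s..t1} \<inter> c -` {1}"
  have Tcl: "closed T" unfolding T_def
    by (rule continuous_closed_preimage) (use ccont st t1 in \<open>auto intro: continuous_on_subset\<close>)
  have sT: "s \<in> T" using cs t1 unfolding T_def by auto
  define t0 where "t0 = Sup T"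
  have bT: "bdd_above T" unfolding T_def by auto
  have t0T: "t0 \<in> T" unfolding t0_def using closed_contains_Sup[OF _ bT Tcl] sT by auto
  have t0: "s \<le> t0" "t0 \<le> t1" "c t0 = 1" using t0T unfolding T_def by auto
  have t01: "t0 < t1" using t0 t1 by (metis antisym_conv1 not_one_le_zero)
  have cmid: "0 < c \<tau> \<and> c \<tau> < 1" if "t0 < \<tau>" "\<tau> < t1" for \<tau>
  proof
    show "0 < c \<tau>" using cpos that t0 by simp
    have "c \<tau> \<noteq> 1"
    proof
      assume "c \<tau> = 1"
      then have "\<tau> \<in> T" using that t0 unfolding T_def by auto
      then have "\<tau> \<le> t0" unfolding t0_def using bT by (rule cSup_upper)
      then show False using that by simp
    qed
    moreover have "c \<tau> \<le> 1" using cabs[of \<tau>] that t0 t1 st by auto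
    ultimately show "c \<tau> < 1" by simp
  qed
  define G where "G \<tau> = arccos (c \<tau>) - ell \<tau>" for \<tau>
  have sub: "{t0..t1} \<subseteq> {0..1}" using t0 t1 st by auto
  have "G t1 \<le> G t0"
  proof (rule DERIV_nonpos_imp_decreasing_open[OF less_imp_le[OF t01]])
    show "continuous_on {t0..t1} G" unfolding G_def
      using sub cabs
      by (intro continuous_intros continuous_on_subset[OF ccont sub] continuous_on_subset[OF lcont sub])
         (auto simp: abs_le_iff)
  next
    fix x assume x: "t0 < x" "x < t1"
    have x01: "0 < x" "x < 1" using x t0 t1 st by auto
    have atx: "at x within {0..1} = at x" using x01 by (rule at_within_Icc_at)
    have cx: "-1 < c x" "c x < 1" using cmid[OF x] by auto
    have d1: "DERIV c x :> inner (u s) (u' x)" using cder[of x] x01 atx by simp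
    have d2: "DERIV ell x :> norm (u' x)" using lder[of x] x01 atx by simp
    have dG: "DERIV G x :> inverse (- sqrt (1 - (c x)\<^sup>2)) * inner (u s) (u' x) - norm (u' x)"
      unfolding G_def by (intro DERIV_diff DERIV_chain2[where f=arccos and g=c, OF DERIV_arccos[OF cx]] d1 d2)
    have sq: "sqrt (1 - (c x)\<^sup>2) > 0" using cx by (simp add: abs_square_less_1)
    have b: "\<bar>inner (u s) (u' x)\<bar> \<le> sqrt (1 - (c x)\<^sup>2) * norm (u' x)"
      unfolding c_def by (rule perp_bound) (use unit orth st x01 in auto)
    have "inverse (- sqrt (1 - (c x)\<^sup>2)) * inner (u s) (u' x) \<le> norm (u' x)"
    proof -
      have "inverse (- sqrt (1 - (c x)\<^sup>2)) * inner (u s) (u' x)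
          = (- inner (u s) (u' x)) / sqrt (1 - (c x)\<^sup>2)" by (simp add: field_simps)
      also have "\<dots> \<le> norm (u' x)"
        by (subst pos_divide_le_eq[OF sq]) (use b in \<open>simp add: abs_le_iff mult.commute\<close>)
      finally show ?thesis .
    qed
    then show "\<exists>y. DERIV G x :> y \<and> y \<le> 0" using dG by auto
  qed
  then have A: "arccos (c t1) \<le> ell t1 - ell t0" using t0 by (simp add: G_def)
  have int: "(\<lambda>t. norm (u' t)) integrable_on {a..b}" if "{a..b} \<subseteq> {0..1}" for a b
    by (rule integrable_continuous_interval) (rule continuous_on_subset[OF cont that])
  have "ell t0 + integral {t0..t1} (\<lambda>t. norm (u' t)) = ell t1"
    unfolding ell_def by (rule Henstock_Kurzweil_Integration.integral_combine) (use t0 t1 st int[of 0 t1] in auto)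
  moreover have "integral {t0..t1} (\<lambda>t. norm (u' t)) \<le> integral {0..1} (\<lambda>t. norm (u' t))"
    by (rule integral_subset_le) (use sub int in auto)
  ultimately have B: "ell t1 - ell t0 < pi/2" using len by linarith
  have "arccos 0 \<le> arccos (c t1)"
    by (rule arccos_le_arccos) (use cabs[of t1] t1 st in auto)
  then show False using A B by simp
qed


lemma mono_lemma:
  fixes f f' :: "real \<Rightarrow> real"
  assumes der: "\<And>x. x \<in> {0..1} \<Longrightarrow> (f has_real_derivative f' x) (at x within {0..1})"
    and nonpos: "\<And>x. 0 < x \<Longrightarrow> x < 1 \<Longrightarrow> a < x \<Longrightarrow> x < b \<Longrightarrow> f' x \<le> 0"
    and ab: "0 \<le> a" "a \<le> b" "b \<le> 1"
  shows "f b \<le> f a"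
proof (rule DERIV_nonpos_imp_decreasing_open[OF ab(2)])
  have "continuous_on {0..1} f"
    by (rule continuous_on_vector_derivative, rule der[unfolded has_real_derivative_iff_has_vector_derivative])
  then show "continuous_on {a..b} f" by (rule continuous_on_subset) (use ab in auto)
next
  fix x assume x: "a < x" "x < b"
  then have x01: "0 < x" "x < 1" using ab by auto
  have "DERIV f x :> f' x" using der[of x] x01 at_within_Icc_at[OF x01] by simp
  then show "\<exists>y. DERIV f x :> y \<and> y \<le> 0" using nonpos x01 x by auto
qed

theorem theorem1:
  fixes z :: "real \<Rightarrow> real ^ 'd" and zstar :: "real ^ 'd" and L :: "real ^ 'd \<Rightarrow> real"
  assumes L_def: "\<And>x. L x = (norm (x - zstar))\<^sup>2"
    and smooth: "smooth_curve z"
    and nonvanishing: "\<And>t. t \<in> {0..1} \<Longrightarrow> vel z t \<noteq> 0"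
    and endpoint: "z 1 = zstar"
    and start: "L (z 0) > 0"
    and gauss: "gauss_length z < pi / 2"
  shows "\<forall>s t. 0 \<le> s \<and> s \<le> t \<and> t \<le> 1 \<longrightarrow> L (z t) \<le> L (z s)"
proof -
  obtain D :: "nat \<Rightarrow> real \<Rightarrow> real ^ 'd" where D0: "D 0 = z"
    and DD: "\<And>k t. t \<in> {0..1} \<Longrightarrow> (D k has_vector_derivative D (Suc k) t) (at t within {0..1})"
    using smooth unfolding smooth_curve_def by blast
  define v where "v = D 1"
  define a where "a = D 2"
  have zd: "(z has_vector_derivative v t) (at t within {0..1})" if "t \<in> {0..1}" for t
    using DD[OF that, of 0] D0 by (simp add: v_def)
  have vd: "(v has_vector_derivative a t) (at t within {0..1})" if "t \<in> {0..1}" for t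
    using DD[OF that, of 1] by (simp add: v_def a_def numeral_2_eq_2)
  have vel: "vel z t = v t" if "t \<in> {0..1}" for t
    unfolding vel_def by (rule vector_derivative_within_closed_interval) (use zd that in auto)
  have vnz: "v t \<noteq> 0" if "t \<in> {0..1}" for t using nonvanishing[OF that] vel[OF that] by simp
  have zcont: "continuous_on {0..1} z" by (rule continuous_on_vector_derivative) (rule zd)
  have vcont: "continuous_on {0..1} v" by (rule continuous_on_vector_derivative) (rule vd)
  have acont: "continuous_on {0..1} a" unfolding a_def
    by (rule continuous_on_vector_derivative) (rule DD)
  define n where "n t = norm (v t)" for t
  define n' where "n' t = inner (v t) (a t) / n t" for t
  define u where "u t = inverse (n t) *\<^sub>R v t" for t
  define u' where "u' t = inverse (n t) *\<^sub>R a t + (- (n' t * inverse (n t ^ Suc (Suc 0)))) *\<^sub>R v t" for t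
  have npos: "n t > 0" if "t \<in> {0..1}" for t using vnz[OF that] by (simp add: n_def)
  have nd: "(n has_real_derivative n' t) (at t within {0..1})" if t: "t \<in> {0..1}" for t
  proof -
    have i: "((\<lambda>x. inner (v x) (v x)) has_real_derivative (inner (v t) (a t) + inner (a t) (v t))) (at t within {0..1})"
      unfolding has_real_derivative_iff_has_vector_derivative
      by (rule bounded_bilinear.has_vector_derivative[OF bounded_bilinear_inner vd[OF t] vd[OF t]])
    have pos: "0 < inner (v t) (v t)" using vnz[OF t] by simp
    have d: "((\<lambda>x. sqrt (inner (v x) (v x))) has_real_derivative
        inverse (sqrt (inner (v t) (v t))) / 2 * (inner (v t) (a t) + inner (a t) (v t))) (at t within {0..1})"
      by (rule DERIV_chain2[where f=sqrt, OF DERIV_real_sqrt[OF pos] i])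
    have nn: "sqrt (inner (v t) (v t)) = n t" by (simp only: n_def norm_eq_sqrt_inner)
    have ic: "inner (a t) (v t) = inner (v t) (a t)" by (rule inner_commute)
    have eq: "inverse (sqrt (inner (v t) (v t))) / 2 * (inner (v t) (a t) + inner (a t) (v t)) = n' t"
      unfolding nn ic n'_def by (simp add: field_simps)
    show ?thesis using d[unfolded eq] unfolding n_def norm_eq_sqrt_inner .
  qed
  have ud: "(u has_vector_derivative u' t) (at t within {0..1})" if t: "t \<in> {0..1}" for t
  proof -
    have "((\<lambda>x. inverse (n x) *\<^sub>R v x) has_vector_derivative
       (inverse (n t) *\<^sub>R a t + (- (n' t * inverse (n t ^ Suc (Suc 0)))) *\<^sub>R v t)) (at t within {0..1})"
      by (rule has_vector_derivative_scaleR[OF DERIV_inverse_fun[OF nd[OF t]] vd[OF t]])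
         (use npos[OF t] in auto)
    then show ?thesis unfolding u_def u'_def by simp
  qed
  have nnz: "\<forall>t\<in>{0..1}. n t \<noteq> 0" using npos by (metis less_irrefl)
  have ncont: "continuous_on {0..1} n" unfolding n_def by (intro continuous_intros vcont)
  have n'cont: "continuous_on {0..1} n'" unfolding n'_def
    using nnz by (intro continuous_intros vcont acont ncont) auto
  have u'cont: "continuous_on {0..1} (\<lambda>t. norm (u' t))" unfolding u'_def
    using nnz by (intro continuous_intros vcont acont ncont n'cont) auto
  have unit: "norm (u t) = 1" if "t \<in> {0..1}" for t
    using npos[OF that] unfolding u_def n_def by simp
  have orth: "inner (u t) (u' t) = 0" if t: "t \<in> {0..1}" for t
  proof -
    have vv: "inner (v t) (v t) = n t * n t" unfolding n_def by (simp add: power2_norm_eq_inner[symmetric] power2_eq_square)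
    show ?thesis using npos[OF t] unfolding u_def u'_def n'_def
      by (simp add: inner_add_right inner_diff_right vv inner_commute[of "a t" "v t"] field_simps power2_eq_square)
  qed
  have gm: "gauss_map z t = u t" if "t \<in> {0..1}" for t
    unfolding gauss_map_def u_def n_def using vel[OF that] by simp
  have gd: "vector_derivative (gauss_map z) (at t within {0..1}) = u' t" if t: "t \<in> {0..1}" for t
    by (rule vector_derivative_within_closed_interval)
       (use t in simp, use t in simp, rule has_vector_derivative_transform[OF t gm ud[OF t]])
  have glen: "gauss_length z = integral {0..1} (\<lambda>t. norm (u' t))"
    unfolding gauss_length_def by (rule integral_cong) (simp add: gd)
  have vpos: "inner (v s) (v t) > 0" if "0 \<le> s" "s \<le> t" "t \<le> 1" for s t
  proof -
    have "inner (u s) (u t) > 0"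
      by (rule key[OF ud u'cont unit orth _ that]) (use gauss glen in auto)
    moreover have "inner (u s) (u t) = inverse (n s) * inverse (n t) * inner (v s) (v t)"
      unfolding u_def by simp
    moreover have "inverse (n s) * inverse (n t) > 0" using npos that by simp
    ultimately show ?thesis by (simp add: zero_less_mult_iff)
  qed
  have dirpos: "inner (zstar - z \<alpha>) (v \<alpha>) \<ge> 0" if al: "\<alpha> \<in> {0..1}" for \<alpha>
  proof -
    define g where "g \<beta> = - inner (z \<beta> - z \<alpha>) (v \<alpha>)" for \<beta>
    have "g 1 \<le> g \<alpha>"
    proof (rule mono_lemma[where f=g and f'="\<lambda>\<beta>. - inner (v \<beta>) (v \<alpha>)" and a=\<alpha> and b=1])
      fix x assume x: "x \<in> {(0::real)..1}"
      have "((\<lambda>\<beta>. inner (z \<beta> - z \<alpha>) (v \<alpha>)) has_vector_derivative inner (v x) (v \<alpha>)) (at x within {0..1})"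
        using bounded_linear.has_vector_derivative[OF bounded_linear_inner_left
             has_vector_derivative_diff[OF zd[OF x] has_vector_derivative_const[of "z \<alpha>"]], of "v \<alpha>"]
        by simp
      then show "(g has_real_derivative - inner (v x) (v \<alpha>)) (at x within {0..1})"
        unfolding g_def has_real_derivative_iff_has_vector_derivative[symmetric]
        by (intro DERIV_minus) (simp add: has_real_derivative_iff_has_vector_derivative)
    next
      fix x :: real assume "0 < x" "x < 1" "\<alpha> < x" "x < 1"
      then show "- inner (v x) (v \<alpha>) \<le> 0" using vpos[of \<alpha> x] al by (simp add: inner_commute)
    qed (use al in auto)
    then show ?thesis unfolding g_def using endpoint
      by (simp add: inner_diff_left)
  qed
  show ?thesis
  proof (intro allI impI)
    fix s t :: real assume st: "0 \<le> s \<and> s \<le> t \<and> t \<le> 1"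
    define h where "h \<tau> = inner (z \<tau> - zstar) (z \<tau> - zstar)" for \<tau>
    have "h t \<le> h s"
    proof (rule mono_lemma[where f=h and f'="\<lambda>\<tau>. 2 * inner (z \<tau> - zstar) (v \<tau>)" and a=s and b=t])
      fix x assume x: "x \<in> {(0::real)..1}"
      have zd': "((\<lambda>\<tau>. z \<tau> - zstar) has_vector_derivative v x) (at x within {0..1})"
        using has_vector_derivative_diff[OF zd[OF x] has_vector_derivative_const[of zstar]] by simp
      have "(h has_vector_derivative (inner (z x - zstar) (v x) + inner (v x) (z x - zstar))) (at x within {0..1})"
        unfolding h_def by (rule bounded_bilinear.has_vector_derivative[OF bounded_bilinear_inner zd' zd'])
      then show "(h has_real_derivative 2 * inner (z x - zstar) (v x)) (at x within {0..1})"
        by (simp add: has_real_derivative_iff_has_vector_derivative inner_commute)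
    next
      fix x :: real assume "0 < x" "x < 1" "s < x" "x < t"
      then have "inner (zstar - z x) (v x) \<ge> 0" using dirpos[of x] by simp
      then show "2 * inner (z x - zstar) (v x) \<le> 0"
        by (metis inner_minus_left minus_diff_eq neg_0_le_iff_le mult_nonneg_nonpos zero_le_numeral)
    qed (use st in auto)
    then show "L (z t) \<le> L (z s)" unfolding h_def L_def by (simp add: power2_norm_eq_inner)
  qed
qed

end
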